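(* Let $\Phi$ be a Young function and $\varphi\in\mathcal{G}^{\rm dec}_1$. Then for every measurable $f$ on $\mathbb{R}^n$, \[ \|f\|_{\mathrm{w}\mathcal{M}_\Phi^\varphi}=\sup_{\lambda>0}\lambda\bigl\|\chi_{\{x\in\mathbb{R}^n:|f(x)|>\lambda\}}\bigr\|_{\mathcal{M}_\Phi^\varphi}. \]
   Context: A Young function is a convex $\Phi:[0,\infty)\to[0,\infty)$ with $\Phi(0)=0$, $\lim_{t\to\infty}\Phi(t)=\infty$. $\mathcal{G}^{\rm dec}_1$ is the set of $\varphi:(0,\infty)\to(0,\infty)$ that are almost decreasing (there is $C>0$ with $C\varphi(r)\ge\varphi(s)$ for $r<s$) and submultiplicative ($\varphi(rs)\le C\varphi(r)\varphi(s)$). For a ball $B=B(a,r)$: $\|f\|_{\Phi,B}=\inf\{\lambda>0:\frac1{|B|}\int_B\Phi(|f|/\lambda)\le1\}$ and $\|f\|_{\mathcal{M}_\Phi^\varphi}=\sup_{a,r}\frac1{\varphi(r)}\|f\|_{\Phi,B(a,r)}$. For measurable $A$, $f$ and $t>0$, $m(A,f,t)=|\{x\in A:|f(x)|>t\}|$. Define $\|f\|_{\Phi,B,\mathrm{weak}}=\inf\{\lambda>0:\sup_{t>0}\frac1{|B|}\Phi(t)\,m(B,f/\lambda,t)\le1\}$ and $\|f\|_{\mathrm{w}\mathcal{M}_\Phi^\varphi}=\sup_{a\in\mathbb{R}^n,r>0}\frac1{\varphi(r)}\|f\|_{\Phi,B(a,r),\mathrm{weak}}$. $\chi_E$ is the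 characteristic function of $E$. *)

theory Defs
  imports "HOL-Analysis.Analysis"
begin

definition young_function :: "(real \<Rightarrow> real) \<Rightarrow> bool" where
  "young_function \<Phi> \<longleftrightarrow> convex_on {0..} \<Phi> \<and> (\<forall>t\<ge>0. \<Phi> t \<ge> 0) \<and> \<Phi> 0 = 0
     \<and> filterlim \<Phi> at_top at_top"

definition G_dec_1 :: "(real \<Rightarrow> real) \<Rightarrow> bool" where
  "G_dec_1 \<phi> \<longleftrightarrow> (\<forall>r>0. \<phi> r > 0)
     \<and> (\<exists>C>0. \<forall>r s. 0 < r \<longrightarrow> r < s \<longrightarrow> C * \<phi> r \<ge> \<phi> s)
     \<and> (\<exists>C>0. \<forall>r>0. \<forall>s>0. \<phi> (r * s) \<le> C * \<phi> r * \<phi> s)"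

definition mdist :: "'a::euclidean_space set \<Rightarrow> ('a \<Rightarrow> real) \<Rightarrow> real \<Rightarrow> ennreal" where
  "mdist A f t = emeasure lebesgue {x \<in> A. \<bar>f x\<bar> > t}"

text \<open>Luxemburg-type average norm on a ball (value in [0,\<infinity>], Inf of empty set = \<infinity>).\<close>
definition orlicz_ball_norm :: "(real \<Rightarrow> real) \<Rightarrow> ('a::euclidean_space \<Rightarrow> real) \<Rightarrow> 'a set \<Rightarrow> ennreal" where
  "orlicz_ball_norm \<Phi> f B = (INF l\<in>{l::real. l > 0 \<and>
      ennreal (1 / measure lebesgue B) * (\<integral>\<^sup>+ x\<in>B. ennreal (\<Phi> (\<bar>f x\<bar> / l)) \<partial>lebesgue) \<le> 1}.
      ennreal l)"

definition weak_orlicz_ball_norm :: "(real \<Rightarrow> real) \<Rightarrow> ('a::euclidean_space \<Rightarrow> real) \<Rightarrow> 'a set \<Rightarrow> ennreal" where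
  "weak_orlicz_ball_norm \<Phi> f B = (INF l\<in>{l::real. l > 0 \<and>
      (SUP t\<in>{0<..}. ennreal (1 / measure lebesgue B) * ennreal (\<Phi> t) * mdist B (\<lambda>x. f x / l) t) \<le> 1}.
      ennreal l)"

definition morrey_orlicz_norm :: "(real \<Rightarrow> real) \<Rightarrow> (real \<Rightarrow> real) \<Rightarrow> ('a::euclidean_space \<Rightarrow> real) \<Rightarrow> ennreal" where
  "morrey_orlicz_norm \<Phi> \<phi> f = (SUP (a, r)\<in>UNIV \<times> {0<..}. ennreal (1 / \<phi> r) * orlicz_ball_norm \<Phi> f (ball a r))"

definition weak_morrey_orlicz_norm :: "(real \<Rightarrow> real) \<Rightarrow> (real \<Rightarrow> real) \<Rightarrow> ('a::euclidean_space \<Rightarrow> real) \<Rightarrow> ennreal" where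
  "weak_morrey_orlicz_norm \<Phi> \<phi> f = (SUP (a, r)\<in>UNIV \<times> {0<..}. ennreal (1 / \<phi> r) * weak_orlicz_ball_norm \<Phi> f (ball a r))"

end

theory Submission
  imports Defs
begin

lemma Phi_mono:
  assumes "young_function \<Phi>" "0 \<le> t" "t \<le> u"
  shows "\<Phi> t \<le> \<Phi> u"
proof (cases "u = 0")
  case True then show ?thesis using assms by auto
next
  case False
  then have u: "u > 0" using assms by auto
  have cv: "convex_on {0..} \<Phi>" and z: "\<Phi> 0 = 0" and nn: "\<forall>t\<ge>0. \<Phi> t \<ge> 0"
    using assms(1) unfolding young_function_def by auto
  have "\<Phi> ((1 - t/u) *\<^sub>R 0 + (t/u) *\<^sub>R u) \<le> (1 - t/u) * \<Phi> 0 + (t/u) * \<Phi> u"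
    by (rule convex_onD[OF cv]) (use assms u in auto)
  moreover have "(1 - t/u) *\<^sub>R 0 + (t/u) *\<^sub>R u = t" using u by simp
  moreover have "(t/u) * \<Phi> u \<le> \<Phi> u"
    using nn u assms by (intro mult_left_le_one_le) auto
  ultimately show ?thesis using z by simp
qed

lemma orlicz_ind:
  assumes "young_function \<Phi>" "B \<in> sets lebesgue" "E \<in> sets lebesgue" "\<mu> > 0"
  shows "(\<integral>\<^sup>+ x\<in>B. ennreal (\<Phi> (\<bar>(indicator E x :: real)\<bar> / \<mu>)) \<partial>lebesgue)
       = ennreal (\<Phi> (1/\<mu>)) * emeasure lebesgue (B \<inter> E)"
proof -
  have z: "\<Phi> 0 = 0" using assms(1) unfolding young_function_def by auto
  have "(\<integral>\<^sup>+ x\<in>B. ennreal (\<Phi> (\<bar>(indicator E x :: real)\<bar> / \<mu>)) \<partial>lebesgue)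
      = (\<integral>\<^sup>+ x. ennreal (\<Phi> (1/\<mu>)) * indicator (B \<inter> E) x \<partial>lebesgue)"
    by (rule nn_integral_cong) (auto simp: indicator_def z)
  also have "\<dots> = ennreal (\<Phi> (1/\<mu>)) * emeasure lebesgue (B \<inter> E)"
    using assms by (intro nn_integral_cmult_indicator) auto
  finally show ?thesis .
qed

lemma key:
  fixes f :: "'a::euclidean_space \<Rightarrow> real"
  assumes Y: "young_function \<Phi>" and B: "B \<in> sets lebesgue" and f: "f \<in> borel_measurable lebesgue"
  shows "weak_orlicz_ball_norm \<Phi> f B =
    (SUP s\<in>{0<..}. ennreal s * orlicz_ball_norm \<Phi> (indicator {x. \<bar>f x\<bar> > s} :: 'a \<Rightarrow> real) B)"
    (is "?W = ?S")
proof -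
  define c where "c = ennreal (1 / measure lebesgue B)"
  define a where "a s = emeasure lebesgue (B \<inter> {x. \<bar>f x\<bar> > s})" for s
  define N where "N s = orlicz_ball_norm \<Phi> (indicator {x. \<bar>f x\<bar> > s} :: 'a \<Rightarrow> real) B" for s
  have E: "{x. \<bar>f x\<bar> > s} \<in> sets lebesgue" for s
  proof -
    have "(\<lambda>x. \<bar>f x\<bar>) \<in> borel_measurable lebesgue" using f by measurable
    then show ?thesis using borel_measurable_iff_greater[of "\<lambda>x. \<bar>f x\<bar>"] by auto
  qed
  have md: "mdist B (\<lambda>x. f x / l) t = a (l * t)" if "l > 0" for l t
  proof -
    have "{x \<in> B. \<bar>f x / l\<bar> > t} = B \<inter> {x. \<bar>f x\<bar> > l * t}"
      using that by (auto simp: abs_divide pos_less_divide_eq mult.commute)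
    then show ?thesis unfolding mdist_def a_def by simp
  qed
  have Nd: "N s = (INF \<mu>\<in>{\<mu>::real. \<mu> > 0 \<and> c * (ennreal (\<Phi> (1/\<mu>)) * a s) \<le> 1}. ennreal \<mu>)" for s
    unfolding N_def orlicz_ball_norm_def c_def a_def
    using orlicz_ind[OF Y B E] by (intro INF_cong) auto
  have Wd: "?W = (INF l\<in>{l::real. l > 0 \<and> (SUP t\<in>{0<..}. c * ennreal (\<Phi> t) * a (l * t)) \<le> 1}. ennreal l)"
    unfolding weak_orlicz_ball_norm_def c_def
    using md by (intro INF_cong) auto
  have ge: "ennreal s * N s \<le> ?W" if s: "s > 0" for s
    unfolding Wd
  proof (rule INF_greatest)
    fix l assume "l \<in> {l::real. l > 0 \<and> (SUP t\<in>{0<..}. c * ennreal (\<Phi> t) * a (l * t)) \<le> 1}"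
    then have l: "l > 0" and cond: "(SUP t\<in>{0<..}. c * ennreal (\<Phi> t) * a (l * t)) \<le> 1" by auto
    have "c * ennreal (\<Phi> (s/l)) * a (l * (s/l)) \<le> 1"
      using order_trans[OF SUP_upper cond, of "s/l"] s l by auto
    then have "c * (ennreal (\<Phi> (1/(l/s))) * a s) \<le> 1" using l by (simp add: mult.assoc)
    then have "N s \<le> ennreal (l/s)" unfolding Nd using l s by (intro INF_lower) auto
    then have "ennreal s * N s \<le> ennreal s * ennreal (l/s)" by (rule mult_left_mono) auto
    also have "\<dots> = ennreal l" by (subst ennreal_mult[symmetric]) (use s l in auto)
    finally show "ennreal s * N s \<le> ennreal l" .
  qed
  have le: "?W \<le> ?S"
  proof (rule ennreal_le_epsilon)
    fix e :: real assume St: "?S < top" and e: "0 < e"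
    define l where "l = enn2real ?S + e"
    have l0: "l > 0" using e by (simp add: l_def enn2real_nonneg add_nonneg_pos)
    obtain r where r: "?S = ennreal r" "r \<ge> 0" using St by (cases ?S rule: ennreal_cases) auto
    have lr: "l = r + e" unfolding l_def using r by simp
    have lS: "ennreal l = ?S + ennreal e"
      using r e unfolding lr by (simp add: ennreal_plus)
    have Sl: "?S < ennreal l" using r e unfolding lr by (simp add: ennreal_less_iff)
    have "?W \<le> ennreal l" unfolding Wd
    proof (rule INF_lower, safe)
      show "l > 0" by (rule l0)
      show "(SUP t\<in>{0<..}. c * ennreal (\<Phi> t) * a (l * t)) \<le> 1"
      proof (rule SUP_least)
        fix t :: real assume "t \<in> {0<..}"
        then have t: "t > 0" by simp
        define s where "s = l * t"
        have s: "s > 0" using t l0 by (simp add: s_def)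
        have "ennreal s * N s \<le> ?S" using s unfolding N_def by (intro SUP_upper) auto
        then have lt: "ennreal s * N s < ennreal l" using Sl by simp
        have "N s < ennreal (1/t)"
        proof (rule ccontr)
          assume "\<not> N s < ennreal (1/t)"
          then have "ennreal (1/t) \<le> N s" by simp
          then have "ennreal s * ennreal (1/t) \<le> ennreal s * N s" by (rule mult_left_mono) auto
          moreover have "ennreal s * ennreal (1/t) = ennreal l"
            using s t by (simp add: s_def flip: ennreal_mult)
          ultimately show False using lt by simp
        qed
        then obtain \<mu> where mu: "\<mu> > 0" "c * (ennreal (\<Phi> (1/\<mu>)) * a s) \<le> 1" "ennreal \<mu> < ennreal (1/t)"
          unfolding Nd by (auto simp: INF_less_iff)
        have "\<mu> < 1/t" using mu(3) mu(1) ennreal_less_iff[of \<mu> "1/t"] by auto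
        then have "t < 1/\<mu>" using mu(1) t by (simp add: field_simps)
        then have "\<Phi> t \<le> \<Phi> (1/\<mu>)" using Phi_mono[OF Y] t by auto
        then have "c * ennreal (\<Phi> t) * a s \<le> c * (ennreal (\<Phi> (1/\<mu>)) * a s)"
          by (simp add: mult.assoc mult_left_mono mult_right_mono ennreal_leI)
        also have "\<dots> \<le> 1" by (rule mu(2))
        finally show "c * ennreal (\<Phi> t) * a (l * t) \<le> 1" by (simp add: s_def)
      qed
    qed
    then show "?W \<le> ?S + ennreal e" using lS by simp
  qed
  show ?thesis
    by (rule antisym[OF le]) (rule SUP_least, unfold N_def[symmetric], use ge in auto)
qed

theorem lemma5p3:
  fixes \<Phi> \<phi> :: "real \<Rightarrow> real" and f :: "'a::euclidean_space \<Rightarrow> real"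
  assumes "young_function \<Phi>" and "G_dec_1 \<phi>" and "f \<in> borel_measurable lebesgue"
  shows "weak_morrey_orlicz_norm \<Phi> \<phi> f =
    (SUP l\<in>{0<..}. ennreal l * morrey_orlicz_norm \<Phi> \<phi> (indicator {x. \<bar>f x\<bar> > l} :: 'a \<Rightarrow> real))"
proof -
  define N where "N p s = orlicz_ball_norm \<Phi> (indicator {x. \<bar>f x\<bar> > s} :: 'a \<Rightarrow> real) (ball (fst p) (snd p))" for p s
  define c where "c p = ennreal (1 / \<phi> (snd p))" for p :: "'a \<times> real"
  have "weak_morrey_orlicz_norm \<Phi> \<phi> f = (SUP p\<in>UNIV \<times> {0<..}. c p * (SUP s\<in>{0<..}. ennreal s * N p s))"
    unfolding weak_morrey_orlicz_norm_def c_def N_def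
    using key[OF assms(1) _ assms(3)] by (intro SUP_cong) auto
  also have "\<dots> = (SUP p\<in>UNIV \<times> {0<..}. SUP s\<in>{0<..}. ennreal s * (c p * N p s))"
    by (simp add: SUP_mult_left_ennreal mult.left_commute)
  also have "\<dots> = (SUP s\<in>{0<..}. SUP p\<in>UNIV \<times> {0<..}. ennreal s * (c p * N p s))"
    by (rule SUP_commute)
  also have "\<dots> = (SUP s\<in>{0<..}. ennreal s * (SUP p\<in>UNIV \<times> {0<..}. c p * N p s))"
    by (simp add: SUP_mult_left_ennreal)
  also have "\<dots> = (SUP l\<in>{0<..}. ennreal l * morrey_orlicz_norm \<Phi> \<phi> (indicator {x. \<bar>f x\<bar> > l} :: 'a \<Rightarrow> real))"
    unfolding morrey_orlicz_norm_def c_def N_def by (simp add: case_prod_beta')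
  finally show ?thesis .
qed

end
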